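(* Let $\Omega\subseteq\mathbb R^N$ be an open set with bounded inner radius $R:=\sup_{x\in\Omega}\operatorname{dist}(x,\partial\Omega)<\infty$, let $\alpha,\beta\ge0$, $r_0>0$ and $\lambda>1$. There exist $c,C>0$ depending only on $N,R,\alpha,\beta,r_0,\lambda$ such that for every $u:\Omega\to\mathbb R$, $$c\|u\|^{(\beta)}_{\mathcal L^\alpha(\Omega)}\le\sup_{\substack{B_{\lambda r}(x)\subseteq\Omega\\ r\in(0,r_0)}}\Big(\ell^\beta(r)\|u\|_{L^\infty(B_r(x))}+\ell^{\alpha+\beta}(r)[u]_{\mathcal L^\alpha(B_r(x))}\Big)\le C\|u\|^{(\beta)}_{\mathcal L^\alpha(\Omega)},$$ meaning that either all three quantities are finite and the inequalities hold, or all three are infinite.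
   Context: $\ell(\rho):=|\ln(\min\{\rho,1/10\})|^{-1}$ for $\rho>0$, $\ell(0):=0$. For an open set $U$, $d(x):=\operatorname{dist}(x,\partial U)$, $d(x,y):=\min(d(x),d(y))$. For $\alpha,\beta\ge0$ and $u:U\to\mathbb R$: $[u]_{\mathcal L^\alpha(U)}:=\sup_{x\ne y\in U}\frac{|u(x)-u(y)|}{\ell^\alpha(|x-y|)}$, $[u]^{(\beta)}_{\mathcal L^\alpha(U)}:=\sup_{x\neq y\in U}\ell^{\alpha+\beta}(d(x,y))\frac{|u(x)-u(y)|}{\ell^\alpha(|x-y|)}$, $\|u\|^{(\beta)}_{\mathcal L^\alpha(U)}:=\sup_{x\in U}\ell^\beta(d(x))|u(x)|+[u]^{(\beta)}_{\mathcal L^\alpha(U)}$. *)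

theory Defs
  imports "HOL-Analysis.Analysis"
begin

definition ell :: "real \<Rightarrow> real" where
  "ell \<rho> = (if \<rho> > 0 then 1 / \<bar>ln (min \<rho> (1/10))\<bar> else 0)"

definition bdist :: "'a::euclidean_space set \<Rightarrow> 'a \<Rightarrow> real" where
  "bdist U x = infdist x (frontier U)"

definition Lsemi :: "real \<Rightarrow> 'a::euclidean_space set \<Rightarrow> ('a \<Rightarrow> real) \<Rightarrow> ereal" where
  "Lsemi \<alpha> U u = (SUP p \<in> {(x, y). x \<in> U \<and> y \<in> U \<and> x \<noteq> y}.
      ereal (\<bar>u (fst p) - u (snd p)\<bar> / (ell (dist (fst p) (snd p)) powr \<alpha>)))"

definition Lsemi_w :: "real \<Rightarrow> real \<Rightarrow> 'a::euclidean_space set \<Rightarrow> ('a \<Rightarrow> real) \<Rightarrow> ereal" where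
  "Lsemi_w \<alpha> \<beta> U u = (SUP p \<in> {(x, y). x \<in> U \<and> y \<in> U \<and> x \<noteq> y}.
      ereal (ell (min (bdist U (fst p)) (bdist U (snd p))) powr (\<alpha> + \<beta>)
             * \<bar>u (fst p) - u (snd p)\<bar> / (ell (dist (fst p) (snd p)) powr \<alpha>)))"

definition Lnorm_w :: "real \<Rightarrow> real \<Rightarrow> 'a::euclidean_space set \<Rightarrow> ('a \<Rightarrow> real) \<Rightarrow> ereal" where
  "Lnorm_w \<alpha> \<beta> U u = (SUP x \<in> U. ereal (ell (bdist U x) powr \<beta> * \<bar>u x\<bar>)) + Lsemi_w \<alpha> \<beta> U u"

definition supnorm :: "'a set \<Rightarrow> ('a \<Rightarrow> real) \<Rightarrow> ereal" where
  "supnorm U u = (SUP x \<in> U. ereal \<bar>u x\<bar>)"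

definition local_quantity ::
  "real \<Rightarrow> real \<Rightarrow> real \<Rightarrow> real \<Rightarrow> 'a::euclidean_space set \<Rightarrow> ('a \<Rightarrow> real) \<Rightarrow> ereal" where
  "local_quantity \<alpha> \<beta> r0 lam U u =
     (SUP p \<in> {(x, r). 0 < r \<and> r < r0 \<and> ball x (lam * r) \<subseteq> U}.
        ereal (ell (snd p) powr \<beta>) * supnorm (ball (fst p) (snd p)) u
      + ereal (ell (snd p) powr (\<alpha> + \<beta>)) * Lsemi \<alpha> (ball (fst p) (snd p)) u)"

end

theory Submission
  imports Defs
begin


lemma infdist_geI:
  assumes "A \<noteq> {}" "\<And>y. y \<in> A \<Longrightarrow> e \<le> dist x y"
  shows "e \<le> infdist x A"
  using assms unfolding infdist_def by (auto intro!: cINF_greatest)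

lemma bdist_pos:
  fixes \<Omega> :: "'a::euclidean_space set"
  assumes "open \<Omega>" "\<Omega> \<noteq> {}" "\<Omega> \<noteq> UNIV" "z \<in> \<Omega>"
  shows "0 < bdist \<Omega> z"
  unfolding bdist_def
  apply (rule infdist_pos_not_in_closed)
  using assms frontier_not_empty[of \<Omega>] by (auto simp: frontier_def interior_open)

lemma bdist_ball_ge:
  fixes \<Omega> :: "'a::euclidean_space set"
  assumes "open \<Omega>" "\<Omega> \<noteq> {}" "\<Omega> \<noteq> UNIV" "ball x (lam*r) \<subseteq> \<Omega>" "z \<in> ball x r"
  shows "(lam - 1) * r \<le> bdist \<Omega> z"
  unfolding bdist_def
proof (rule infdist_geI)
  show "frontier \<Omega> \<noteq> {}" using assms frontier_not_empty by blast
  fix y assume "y \<in> frontier \<Omega>"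
  then have "y \<notin> \<Omega>" using assms(1) by (auto simp: frontier_def interior_open)
  then have "dist x y \<ge> lam * r" using assms(4) by (meson mem_ball not_le subsetD)
  moreover have "dist x z < r" using assms(5) by simp
  moreover have "dist x y \<le> dist x z + dist z y" by (rule dist_triangle)
  ultimately show "(lam - 1) * r \<le> dist z y" by (simp add: algebra_simps)
qed

lemma ball_bdist_subset:
  fixes \<Omega> :: "'a::euclidean_space set"
  assumes "open \<Omega>" "x \<in> \<Omega>"
  shows "ball x (bdist \<Omega> x) \<subseteq> \<Omega>"
proof
  fix y assume y: "y \<in> ball x (bdist \<Omega> x)"
  show "y \<in> \<Omega>"
  proof (rule ccontr)
    assume "y \<notin> \<Omega>"
    then have "closed_segment x y \<inter> frontier \<Omega> \<noteq> {}"
      using assms by (intro connected_Int_frontier) auto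
    then obtain p where p: "p \<in> closed_segment x y" "p \<in> frontier \<Omega>" by blast
    have "dist x p \<le> dist x y" using p(1) by (simp add: dist_commute dist_in_closed_segment)
    moreover have "infdist x (frontier \<Omega>) \<le> dist x p" using p(2) by (rule infdist_le)
    ultimately show False using y by (simp add: bdist_def)
  qed
qed

lemma ell_pos: "s > 0 \<Longrightarrow> ell s > 0"
  unfolding ell_def by (auto simp: min_def)

lemma ell_nonneg: "ell s \<ge> 0"
  unfolding ell_def by auto

lemma ell_le: "ell s \<le> 1 / ln 10"
proof (cases "s > 0")
  case True
  have "ln 10 \<le> \<bar>ln (min s (1/10))\<bar>"
  proof -
    have "ln (min s (1/10)) \<le> ln (1/10)" using True by (subst ln_le_cancel_iff) auto
    also have "ln (1/10::real) = - ln 10" by (simp add: ln_div)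
    finally show ?thesis by linarith
  qed
  moreover have "ln (10::real) > 0" by simp
  ultimately have "1 / \<bar>ln (min s (1/10))\<bar> \<le> 1 / ln 10" by (intro frac_le) auto
  then show ?thesis using True unfolding ell_def by simp
qed (auto simp: ell_def)

lemma ell_small: "0 < s \<Longrightarrow> s < 1/10 \<Longrightarrow> ell s = 1 / (- ln s)"
proof -
  assume "0 < s" "s < 1/10"
  then have "ln s < ln (1/10)" by simp
  moreover have "ln (1/10::real) < 0" by simp
  ultimately show ?thesis using \<open>0 < s\<close> \<open>s < 1/10\<close> unfolding ell_def by (auto simp: min_def)
qed

lemma ell_big: "1/10 \<le> s \<Longrightarrow> ell s = 1 / ln 10"
proof -
  assume "1/10 \<le> s"
  then have "min s (1/10) = 1/10" "s > 0" by auto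
  then show ?thesis unfolding ell_def by (simp add: ln_div)
qed

lemma ell_mono: "0 \<le> a \<Longrightarrow> a \<le> b \<Longrightarrow> ell a \<le> ell b"
proof -
  assume ab: "0 \<le> a" "a \<le> b"
  show ?thesis
  proof (cases "a = 0")
    case True then show ?thesis by (simp add: ell_def ell_nonneg[of b, unfolded ell_def])
  next
    case False
    then have a0: "a > 0" using ab by simp
    show ?thesis
    proof (cases "b < 1/10")
      case True
      then have "ln a \<le> ln b" using a0 ab by simp
      moreover have "ln b < 0" using True a0 ab by (intro ln_less_zero) auto
      ultimately have "1 / (- ln a) \<le> 1 / (- ln b)" by (intro frac_le) auto
      then show ?thesis using ell_small[of a] ell_small[of b] True a0 ab by simp
    next
      case False
      then show ?thesis using ell_big[of b] ell_le[of a] by simp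
    qed
  qed
qed

lemma ratA: fixes L c a :: real assumes "c > 0" "L \<ge> c" "a \<ge> 0"
  shows "1 / L \<le> (c + a) / c * (1 / (a + L))"
proof -
  have "c*(a+L) \<le> L*(c+a)" using mult_right_mono[of c L a] assms by (simp add: algebra_simps)
  moreover have "L > 0" "a + L > 0" using assms by auto
  moreover have "L * c + a * c > 0" using assms by (simp add: add_pos_nonneg)
  ultimately show ?thesis using assms by (simp add: field_simps)
qed

lemma ratB: fixes L c a :: real assumes "c > 0" "L \<le> c" "a + L > 0" "a \<ge> 0"
  shows "1 / c \<le> (c + a) / c * (1 / (a + L))"
proof -
  have "L * c + a * c > 0" using assms by (metis distrib_right mult_pos_pos add.commute)
  then show ?thesis using assms by (simp add: field_simps)
qed

lemma ell_scale:
  assumes "0 < t" "t \<le> 1" "0 < s"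
  shows "ell s \<le> (1 - ln t / ln 10) * ell (t * s)"
proof -
  define a where "a = - ln t"
  have a0: "a \<ge> 0" using assms by (simp add: a_def)
  have l10: "ln (10::real) > 0" by simp
  have ts: "0 < t * s" using assms by simp
  have K: "1 - ln t / ln 10 = (ln 10 + a) / ln 10" using l10 by (simp add: a_def field_simps)
  show ?thesis
  proof (cases "t * s < 1/10")
    case tsm: True
    have e2: "ell (t * s) = 1 / (a + (- ln s))" using ell_small[OF ts tsm] assms by (simp add: a_def ln_mult)
    have "ln (t * s) < 0" using tsm ts by (intro ln_less_zero) auto
    then have pos: "a + (- ln s) > 0" using assms by (simp add: a_def ln_mult)
    show ?thesis
    proof (cases "s < 1/10")
      case True
      have e1: "ell s = 1 / (- ln s)" using ell_small[OF assms(3) True] .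
      have L: "- ln s \<ge> ln 10"
      proof -
        have "ln s \<le> ln (1/10)" using True assms by simp
        then show ?thesis by (simp add: ln_div)
      qed
      show ?thesis using ratA[OF l10 L a0] e1 e2 K by simp
    next
      case False
      have L: "- ln s \<le> ln 10"
      proof -
        have "ln (1/10) \<le> ln s" using False assms by simp
        then show ?thesis by (simp add: ln_div)
      qed
      show ?thesis using ratB[OF l10 L pos a0] ell_big[of s] False e2 K by simp
    qed
  next
    case False
    have "1 \<le> (ln 10 + a) / ln 10" using a0 l10 by simp
    then have "1 / ln 10 \<le> (ln 10 + a) / ln 10 * (1 / ln 10)" using l10
      by (simp add: divide_simps)
    then show ?thesis using ell_big[of "t * s"] ell_big[of s] ell_le[of s] K False
      by (smt (verit) assms mult_le_cancel_right1 divide_pos_pos)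
  qed
qed


lemma other_point:
  fixes x :: "'a::euclidean_space"
  assumes "r > 0"
  shows "\<exists>y\<in>ball x r. y \<noteq> x"
proof -
  obtain e :: 'a where e: "e \<in> Basis" using nonempty_Basis by blast
  define y where "y = x + (r/2) *\<^sub>R e"
  have n: "norm e = 1" using e by simp
  have "dist x y = r/2" using n assms by (simp add: y_def dist_norm)
  moreover have "y \<noteq> x" using n assms by (auto simp: y_def)
  ultimately show ?thesis using assms by (intro bexI[of _ y]) auto
qed

lemma powr_bound:
  fixes a K b p :: real
  assumes "0 \<le> a" "a \<le> K * b" "0 \<le> b" "0 \<le> K" "0 \<le> p"
  shows "a powr p \<le> K powr p * b powr p"
proof -
  have "a powr p \<le> (K * b) powr p" using assms by (intro powr_mono2) auto
  also have "\<dots> = K powr p * b powr p" using assms by (simp add: powr_mult)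
  finally show ?thesis .
qed

lemma ereal_mult_SUP_le:
  fixes a b :: real and f :: "'i \<Rightarrow> real"
  assumes "a > 0" "\<And>i. i \<in> I \<Longrightarrow> a * f i \<le> b"
  shows "ereal a * (SUP i\<in>I. ereal (f i)) \<le> ereal b"
proof -
  have "(SUP i\<in>I. ereal (f i)) \<le> ereal (b / a)"
    using assms by (intro SUP_least) (simp add: pos_le_divide_eq mult.commute)
  then have "ereal a * (SUP i\<in>I. ereal (f i)) \<le> ereal a * ereal (b / a)"
    using assms by (intro ereal_mult_left_mono) auto
  also have "\<dots> = ereal b" using assms by simp
  finally show ?thesis .
qed

lemma supnorm_ge: "z \<in> U \<Longrightarrow> ereal \<bar>u z\<bar> \<le> supnorm U u"
  unfolding supnorm_def by (rule SUP_upper2) auto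

lemma supnorm_nonneg: "z \<in> U \<Longrightarrow> 0 \<le> supnorm U u"
  using supnorm_ge[of z U u] by (metis abs_ge_zero order_trans zero_ereal_def ereal_less_eq(3))

lemma Lsemi_ge: "y \<in> U \<Longrightarrow> z \<in> U \<Longrightarrow> y \<noteq> z \<Longrightarrow>
   ereal (\<bar>u y - u z\<bar> / ell (dist y z) powr \<alpha>) \<le> Lsemi \<alpha> U u"
  unfolding Lsemi_def by (rule SUP_upper2[where i="(y,z)"]) auto

lemma Lsemi_nonneg: "y \<in> U \<Longrightarrow> z \<in> U \<Longrightarrow> y \<noteq> z \<Longrightarrow> 0 \<le> Lsemi \<alpha> U u"
  using Lsemi_ge[of y U z u \<alpha>] by (meson divide_nonneg_nonneg abs_ge_zero powr_ge_zero
     ereal_less_eq(5) order_trans)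



definition Kl :: "real \<Rightarrow> real \<Rightarrow> real" where
  "Kl lam r0 = max (1 - ln (1/lam) / ln 10) (1 / (ln 10 * ell (r0/2)))"

definition Ku :: "real \<Rightarrow> real" where
  "Ku lam = 1 - ln (min 1 (lam - 1)) / ln 10"

lemma Kl_ge1: "lam > 1 \<Longrightarrow> Kl lam r0 \<ge> 1"
proof -
  assume "lam > 1"
  then have "ln (1/lam) \<le> 0" by (simp add: ln_div)
  then have "1 \<le> 1 - ln (1/lam) / ln 10" by (simp add: divide_nonpos_pos)
  then show ?thesis unfolding Kl_def by linarith
qed

lemma Ku_ge1: "lam > 1 \<Longrightarrow> Ku lam \<ge> 1"
proof -
  assume "lam > 1"
  then have "ln (min 1 (lam - 1)) \<le> 0" by (intro ln_le_zero_iff[THEN iffD2]) auto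
  then show ?thesis unfolding Ku_def by (simp add: divide_nonpos_pos)
qed

lemma choose_r:
  fixes \<Omega> :: "'a::euclidean_space set"
  assumes "r0 > 0" "lam > 1" "open \<Omega>" "\<Omega> \<noteq> {}" "\<Omega> \<noteq> UNIV" "x \<in> \<Omega>"
  shows "0 < min (bdist \<Omega> x / lam) (r0/2)" "min (bdist \<Omega> x / lam) (r0/2) < r0"
    "ball x (lam * min (bdist \<Omega> x / lam) (r0/2)) \<subseteq> \<Omega>"
    "ell (bdist \<Omega> x) \<le> Kl lam r0 * ell (min (bdist \<Omega> x / lam) (r0/2))"
proof -
  define r where "r = min (bdist \<Omega> x / lam) (r0/2)"
  have d: "bdist \<Omega> x > 0" using bdist_pos assms by blast
  show "0 < min (bdist \<Omega> x / lam) (r0/2)" using d assms by simp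
  show "min (bdist \<Omega> x / lam) (r0/2) < r0" using assms by simp
  have "lam * r \<le> bdist \<Omega> x" using assms by (simp add: r_def min_def field_simps)
  then have "ball x (lam * r) \<subseteq> ball x (bdist \<Omega> x)" by auto
  then show "ball x (lam * min (bdist \<Omega> x / lam) (r0/2)) \<subseteq> \<Omega>"
    using ball_bdist_subset[OF assms(3,6)] unfolding r_def by blast
  have er: "ell r \<ge> 0" by (rule ell_nonneg)
  have "ell (bdist \<Omega> x) \<le> Kl lam r0 * ell r"
  proof (cases "r = bdist \<Omega> x / lam")
    case True
    have "ell (bdist \<Omega> x) \<le> (1 - ln (1/lam) / ln 10) * ell ((1/lam) * bdist \<Omega> x)"
      using assms d by (intro ell_scale) auto
    also have "\<dots> = (1 - ln (1/lam) / ln 10) * ell r" using True by simp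
    also have "\<dots> \<le> Kl lam r0 * ell r" using er
      by (intro mult_right_mono) (auto simp: Kl_def)
    finally show ?thesis .
  next
    case False
    then have r: "r = r0/2" by (auto simp: r_def min_def)
    have p: "ell (r0/2) > 0" using assms by (intro ell_pos) auto
    have "ell (bdist \<Omega> x) \<le> 1 / ln 10" by (rule ell_le)
    also have "\<dots> = (1 / (ln 10 * ell (r0/2))) * ell (r0/2)" using p by simp
    also have "\<dots> \<le> Kl lam r0 * ell (r0/2)" using p by (intro mult_right_mono) (auto simp: Kl_def)
    also have "\<dots> = Kl lam r0 * ell r" by (simp only: r)
    finally show ?thesis .
  qed
  then show "ell (bdist \<Omega> x) \<le> Kl lam r0 * ell (min (bdist \<Omega> x / lam) (r0/2))"
    by (simp add: r_def)
qed

lemma ell_up: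
  assumes "lam > 1" "0 < r" "(lam - 1) * r \<le> m"
  shows "ell r \<le> Ku lam * ell m"
proof -
  define t where "t = min 1 (lam - 1)"
  have t: "0 < t" "t \<le> 1" using assms by (auto simp: t_def)
  have "ell r \<le> Ku lam * ell (t * r)" unfolding Ku_def t_def[symmetric]
    using t assms by (intro ell_scale) auto
  also have "\<dots> \<le> Ku lam * ell m"
  proof (intro mult_left_mono ell_mono)
    show "0 \<le> t * r" using t assms by simp
    have "t * r \<le> (lam - 1) * r" using assms by (intro mult_right_mono) (auto simp: t_def)
    then show "t * r \<le> m" using assms by linarith
    show "0 \<le> Ku lam" using Ku_ge1[OF assms(1)] by simp
  qed
  finally show ?thesis .
qed



lemma lower_Q1:
  fixes \<Omega> :: "'a::euclidean_space set"
  assumes "\<beta> \<ge> 0" "r0 > 0" "lam > 1" "open \<Omega>" "\<Omega> \<noteq> {}" "\<Omega> \<noteq> UNIV" "x \<in> \<Omega>"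
    and P1: "\<And>x r z. 0 < r \<Longrightarrow> r < r0 \<Longrightarrow> ball x (lam*r) \<subseteq> \<Omega> \<Longrightarrow> z \<in> ball x r \<Longrightarrow>
        ell r powr \<beta> * \<bar>u z\<bar> \<le> M"
  shows "ell (bdist \<Omega> x) powr \<beta> * \<bar>u x\<bar> \<le> Kl lam r0 powr \<beta> * M"
proof -
  define r where "r = min (bdist \<Omega> x / lam) (r0/2)"
  note cr = choose_r[OF assms(2-7), folded r_def]
  have 1: "ell r powr \<beta> * \<bar>u x\<bar> \<le> M" using cr by (intro P1) auto
  have K: "Kl lam r0 \<ge> 0" using Kl_ge1[OF assms(3), of r0] by simp
  have 2: "ell (bdist \<Omega> x) powr \<beta> \<le> Kl lam r0 powr \<beta> * ell r powr \<beta>"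
    using cr K assms by (intro powr_bound) (auto simp: ell_nonneg)
  have "ell (bdist \<Omega> x) powr \<beta> * \<bar>u x\<bar> \<le> Kl lam r0 powr \<beta> * ell r powr \<beta> * \<bar>u x\<bar>"
    using 2 by (intro mult_right_mono) auto
  also have "\<dots> \<le> Kl lam r0 powr \<beta> * M" unfolding mult.assoc using 1 by (intro mult_left_mono) auto
  finally show ?thesis .
qed

lemma lower_Q2_aux:
  fixes \<Omega> :: "'a::euclidean_space set"
  assumes "\<alpha> \<ge> 0" "\<beta> \<ge> 0" "r0 > 0" "lam > 1" "open \<Omega>" "\<Omega> \<noteq> {}" "\<Omega> \<noteq> UNIV"
    and xy: "x \<in> \<Omega>" "y \<in> \<Omega>" "x \<noteq> y" "bdist \<Omega> x \<le> bdist \<Omega> y" and M: "M \<ge> 0"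
    and P1: "\<And>x r z. 0 < r \<Longrightarrow> r < r0 \<Longrightarrow> ball x (lam*r) \<subseteq> \<Omega> \<Longrightarrow> z \<in> ball x r \<Longrightarrow>
        ell r powr \<beta> * \<bar>u z\<bar> \<le> M"
    and P2: "\<And>x r y z. 0 < r \<Longrightarrow> r < r0 \<Longrightarrow> ball x (lam*r) \<subseteq> \<Omega> \<Longrightarrow> y \<in> ball x r \<Longrightarrow>
        z \<in> ball x r \<Longrightarrow> y \<noteq> z \<Longrightarrow>
        ell r powr (\<alpha> + \<beta>) * (\<bar>u y - u z\<bar> / ell (dist y z) powr \<alpha>) \<le> M"
  shows "ell (min (bdist \<Omega> x) (bdist \<Omega> y)) powr (\<alpha> + \<beta>) * \<bar>u x - u y\<bar>
           / ell (dist x y) powr \<alpha> \<le> 2 * Kl lam r0 powr (\<alpha> + \<beta>) * M"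
proof -
  define r where "r = min (bdist \<Omega> x / lam) (r0/2)"
  define K where "K = Kl lam r0"
  define E where "E = ell (bdist \<Omega> x)"
  have mn: "min (bdist \<Omega> x) (bdist \<Omega> y) = bdist \<Omega> x" using xy by simp
  note cr = choose_r[OF assms(3-7) xy(1), folded r_def K_def E_def]
  have K0: "K \<ge> 1" unfolding K_def using Kl_ge1[OF assms(4)] by simp
  have E0: "E \<ge> 0" by (simp add: E_def ell_nonneg)
  have r0': "ell r \<ge> 0" by (simp add: ell_nonneg)
  have dpos: "dist x y > 0" using xy by simp
  have Dpos: "ell (dist x y) powr \<alpha> > 0" using ell_pos[OF dpos] by simp
  have KM: "0 \<le> K powr (\<alpha> + \<beta>) * M" using M by simp
  show ?thesis
  proof (cases "dist x y < r")
    case True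
    then have yb: "y \<in> ball x r" by simp
    have xb: "x \<in> ball x r" using cr by simp
    define q where "q = \<bar>u x - u y\<bar> / ell (dist x y) powr \<alpha>"
    have q0: "q \<ge> 0" by (simp add: q_def)
    have 1: "ell r powr (\<alpha> + \<beta>) * q \<le> M" unfolding q_def using cr xy
      by (intro P2[OF _ _ _ xb yb]) auto
    have 2: "E powr (\<alpha> + \<beta>) \<le> K powr (\<alpha> + \<beta>) * ell r powr (\<alpha> + \<beta>)"
      using cr K0 E0 r0' assms by (intro powr_bound) auto
    have "ell (min (bdist \<Omega> x) (bdist \<Omega> y)) powr (\<alpha> + \<beta>) * \<bar>u x - u y\<bar>
           / ell (dist x y) powr \<alpha> = E powr (\<alpha> + \<beta>) * q" by (simp add: mn E_def q_def)
    also have "\<dots> \<le> K powr (\<alpha> + \<beta>) * ell r powr (\<alpha> + \<beta>) * q"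
      using 2 q0 by (intro mult_right_mono) auto
    also have "\<dots> \<le> K powr (\<alpha> + \<beta>) * M" unfolding mult.assoc using 1 by (intro mult_left_mono) auto
    also have "\<dots> \<le> 2 * K powr (\<alpha> + \<beta>) * M" using KM unfolding mult.assoc by linarith
    finally show ?thesis by (simp add: K_def)
  next
    case False
    have h1: "E powr \<beta> * \<bar>u x\<bar> \<le> K powr \<beta> * M" unfolding E_def K_def
      using assms xy by (intro lower_Q1[where u=u]) (auto intro: P1)
    have h2a: "E powr \<beta> \<le> ell (bdist \<Omega> y) powr \<beta>" unfolding E_def using xy assms
      by (intro powr_mono2 ell_mono) (auto simp: bdist_def infdist_nonneg ell_nonneg)
    have h2: "E powr \<beta> * \<bar>u y\<bar> \<le> K powr \<beta> * M"
    proof -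
      have "E powr \<beta> * \<bar>u y\<bar> \<le> ell (bdist \<Omega> y) powr \<beta> * \<bar>u y\<bar>"
        using h2a by (intro mult_right_mono) auto
      also have "\<dots> \<le> K powr \<beta> * M" unfolding K_def
        using assms xy by (intro lower_Q1[where u=u]) (auto intro: P1)
      finally show ?thesis .
    qed
    have h3: "E powr \<beta> * \<bar>u x - u y\<bar> \<le> 2 * K powr \<beta> * M"
    proof -
      have "E powr \<beta> * \<bar>u x - u y\<bar> \<le> E powr \<beta> * (\<bar>u x\<bar> + \<bar>u y\<bar>)"
        by (intro mult_left_mono) auto
      also have "\<dots> \<le> 2 * K powr \<beta> * M" using h1 h2 by (simp add: distrib_left)
      finally show ?thesis .
    qed
    have h4a: "E powr \<alpha> \<le> K powr \<alpha> * ell r powr \<alpha>"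
      using cr K0 E0 r0' assms by (intro powr_bound) auto
    have h4b: "ell r powr \<alpha> \<le> ell (dist x y) powr \<alpha>"
      using False cr assms by (intro powr_mono2 ell_mono) (auto simp: ell_nonneg)
    have h4: "E powr \<alpha> / ell (dist x y) powr \<alpha> \<le> K powr \<alpha>"
    proof -
      have "E powr \<alpha> \<le> K powr \<alpha> * ell (dist x y) powr \<alpha>"
        using h4a h4b K0 by (meson order_trans mult_left_mono powr_ge_zero)
      then show ?thesis using Dpos by (simp add: divide_le_eq)
    qed
    have "ell (min (bdist \<Omega> x) (bdist \<Omega> y)) powr (\<alpha> + \<beta>) * \<bar>u x - u y\<bar>
           / ell (dist x y) powr \<alpha> = (E powr \<alpha> / ell (dist x y) powr \<alpha>) * (E powr \<beta> * \<bar>u x - u y\<bar>)"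
      by (simp add: mn E_def powr_add)
    also have "\<dots> \<le> K powr \<alpha> * (2 * K powr \<beta> * M)"
      using h4 h3 by (rule mult_mono) auto
    also have "\<dots> = 2 * K powr (\<alpha> + \<beta>) * M" by (simp add: powr_add)
    finally show ?thesis by (simp add: K_def)
  qed
qed

lemma upper_pt1:
  fixes \<Omega> :: "'a::euclidean_space set"
  assumes "\<beta> \<ge> 0" "lam > 1" "open \<Omega>" "\<Omega> \<noteq> {}" "\<Omega> \<noteq> UNIV"
    "0 < r" "ball x (lam*r) \<subseteq> \<Omega>" "z \<in> ball x r"
    and R1: "\<And>z. z \<in> \<Omega> \<Longrightarrow> ell (bdist \<Omega> z) powr \<beta> * \<bar>u z\<bar> \<le> M"
  shows "ell r powr \<beta> * \<bar>u z\<bar> \<le> Ku lam powr \<beta> * M"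
proof -
  have "r \<le> lam * r" using assms by simp
  then have zO: "z \<in> \<Omega>" using assms(7,8) by (auto simp: subset_iff)
  have "ell r \<le> Ku lam * ell (bdist \<Omega> z)"
    using assms by (intro ell_up bdist_ball_ge) auto
  then have 2: "ell r powr \<beta> \<le> Ku lam powr \<beta> * ell (bdist \<Omega> z) powr \<beta>"
    using Ku_ge1[OF assms(2)] assms by (intro powr_bound) (auto simp: ell_nonneg)
  have "ell r powr \<beta> * \<bar>u z\<bar> \<le> Ku lam powr \<beta> * ell (bdist \<Omega> z) powr \<beta> * \<bar>u z\<bar>"
    using 2 by (intro mult_right_mono) auto
  also have "\<dots> \<le> Ku lam powr \<beta> * M" unfolding mult.assoc using R1[OF zO]
    by (intro mult_left_mono) auto
  finally show ?thesis .
qed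

lemma upper_pt2:
  fixes \<Omega> :: "'a::euclidean_space set"
  assumes "\<alpha> \<ge> 0" "\<beta> \<ge> 0" "lam > 1" "open \<Omega>" "\<Omega> \<noteq> {}" "\<Omega> \<noteq> UNIV"
    "0 < r" "ball x (lam*r) \<subseteq> \<Omega>" "y \<in> ball x r" "z \<in> ball x r" "y \<noteq> z"
    and R2: "\<And>y z. y \<in> \<Omega> \<Longrightarrow> z \<in> \<Omega> \<Longrightarrow> y \<noteq> z \<Longrightarrow>
      ell (min (bdist \<Omega> y) (bdist \<Omega> z)) powr (\<alpha> + \<beta>) * \<bar>u y - u z\<bar> / ell (dist y z) powr \<alpha> \<le> M"
  shows "ell r powr (\<alpha> + \<beta>) * (\<bar>u y - u z\<bar> / ell (dist y z) powr \<alpha>) \<le> Ku lam powr (\<alpha> + \<beta>) * M"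
proof -
  have "r \<le> lam * r" using assms by simp
  then have yO: "y \<in> \<Omega>" and zO: "z \<in> \<Omega>" using assms(8,9,10) by (auto simp: subset_iff)
  have "(lam - 1) * r \<le> min (bdist \<Omega> y) (bdist \<Omega> z)"
    using bdist_ball_ge[OF assms(4,5,6,8,9)] bdist_ball_ge[OF assms(4,5,6,8,10)] by simp
  then have "ell r \<le> Ku lam * ell (min (bdist \<Omega> y) (bdist \<Omega> z))"
    using assms by (intro ell_up) auto
  then have 2: "ell r powr (\<alpha> + \<beta>) \<le> Ku lam powr (\<alpha> + \<beta>) * ell (min (bdist \<Omega> y) (bdist \<Omega> z)) powr (\<alpha> + \<beta>)"
    using Ku_ge1[OF assms(3)] assms by (intro powr_bound) (auto simp: ell_nonneg)
  define q where "q = \<bar>u y - u z\<bar> / ell (dist y z) powr \<alpha>"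
  have q0: "q \<ge> 0" by (simp add: q_def)
  have "ell r powr (\<alpha> + \<beta>) * q \<le> Ku lam powr (\<alpha> + \<beta>) * ell (min (bdist \<Omega> y) (bdist \<Omega> z)) powr (\<alpha> + \<beta>) * q"
    using 2 q0 by (intro mult_right_mono) auto
  also have "\<dots> \<le> Ku lam powr (\<alpha> + \<beta>) * M" unfolding mult.assoc
    using R2[OF yO zO assms(11)] by (intro mult_left_mono) (auto simp: q_def)
  finally show ?thesis by (simp add: q_def)
qed



lemma LQ_elem:
  assumes "0 < r" "r < r0" "ball x (lam*r) \<subseteq> \<Omega>"
  shows "ereal (ell r powr \<beta>) * supnorm (ball x r) u
       + ereal (ell r powr (\<alpha> + \<beta>)) * Lsemi \<alpha> (ball x r) u \<le> local_quantity \<alpha> \<beta> r0 lam \<Omega> u"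
  unfolding local_quantity_def using assms by (intro SUP_upper2[where i="(x,r)"]) auto

lemma LQ_elem_nonneg:
  fixes x :: "'a::euclidean_space"
  assumes "0 < r"
  shows "0 \<le> ereal (ell r powr \<beta>) * supnorm (ball x r) u
       + ereal (ell r powr (\<alpha> + \<beta>)) * Lsemi \<alpha> (ball x r) u"
proof -
  obtain y where y: "y \<in> ball x r" "y \<noteq> x" using other_point[OF assms] by blast
  have "0 \<le> supnorm (ball x r) u" using assms by (intro supnorm_nonneg[of x]) auto
  moreover have "0 \<le> Lsemi \<alpha> (ball x r) u" using assms y by (intro Lsemi_nonneg[of x _ y]) auto
  ultimately show ?thesis by (intro add_nonneg_nonneg mult_nonneg_nonneg) auto
qed

lemma lower_main:
  fixes \<Omega> :: "'a::euclidean_space set"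
  assumes "\<alpha> \<ge> 0" "\<beta> \<ge> 0" "r0 > 0" "lam > 1" "open \<Omega>" "\<Omega> \<noteq> {}" "\<Omega> \<noteq> UNIV"
  shows "ereal (1 / (Kl lam r0 powr \<beta> + 2 * Kl lam r0 powr (\<alpha> + \<beta>))) * Lnorm_w \<alpha> \<beta> \<Omega> u
     \<le> local_quantity \<alpha> \<beta> r0 lam \<Omega> u"
proof -
  define K where "K = Kl lam r0"
  have K1: "K \<ge> 1" unfolding K_def by (rule Kl_ge1[OF assms(4)])
  define S where "S = K powr \<beta> + 2 * K powr (\<alpha> + \<beta>)"
  have S0: "S > 0" using K1 by (simp add: S_def add_pos_pos)
  obtain x0 where x0: "x0 \<in> \<Omega>" using assms by blast
  define r1 where "r1 = min (bdist \<Omega> x0 / lam) (r0/2)"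
  note cr = choose_r[OF assms(3-7) x0, folded r1_def]
  have LQ0: "0 \<le> local_quantity \<alpha> \<beta> r0 lam \<Omega> u"
    using LQ_elem_nonneg[OF cr(1), where x=x0] LQ_elem[OF cr(1-3)] by (rule order_trans)
  show ?thesis
  proof (cases "local_quantity \<alpha> \<beta> r0 lam \<Omega> u" rule: ereal_cases)
    case PInf then show ?thesis by simp
  next
    case MInf then show ?thesis using LQ0 by simp
  next
    case (real M)
    have M0: "M \<ge> 0" using LQ0 real by simp
    have P1: "ell r powr \<beta> * \<bar>u z\<bar> \<le> M"
      if "0 < r" "r < r0" "ball x (lam*r) \<subseteq> \<Omega>" "z \<in> ball x r" for x r z
    proof -
      have "ereal (ell r powr \<beta>) * ereal \<bar>u z\<bar> \<le> ereal (ell r powr \<beta>) * supnorm (ball x r) u"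
        using that by (intro ereal_mult_left_mono supnorm_ge) auto
      also have "\<dots> \<le> ereal (ell r powr \<beta>) * supnorm (ball x r) u
       + ereal (ell r powr (\<alpha> + \<beta>)) * Lsemi \<alpha> (ball x r) u"
      proof -
        have rp: "0 < r" using that(1) .
        obtain y where y: "y \<in> ball x r" "y \<noteq> x" using other_point[OF rp] by blast
        have "0 \<le> Lsemi \<alpha> (ball x r) u" using y rp by (intro Lsemi_nonneg[of y _ x]) auto
        then show ?thesis by (intro ereal_le_add_self mult_nonneg_nonneg) auto
      qed
      also have "\<dots> \<le> ereal M" using LQ_elem[OF that(1-3), where \<alpha>=\<alpha> and \<beta>=\<beta> and u=u] by (simp only: real)
      finally show ?thesis by simp
    qed
    have P2: "ell r powr (\<alpha> + \<beta>) * (\<bar>u y - u z\<bar> / ell (dist y z) powr \<alpha>) \<le> M"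
      if "0 < r" "r < r0" "ball x (lam*r) \<subseteq> \<Omega>" "y \<in> ball x r" "z \<in> ball x r" "y \<noteq> z" for x r y z
    proof -
      have "ereal (ell r powr (\<alpha> + \<beta>)) * ereal (\<bar>u y - u z\<bar> / ell (dist y z) powr \<alpha>)
          \<le> ereal (ell r powr (\<alpha> + \<beta>)) * Lsemi \<alpha> (ball x r) u"
        using that by (intro ereal_mult_left_mono Lsemi_ge) auto
      also have "\<dots> \<le> ereal (ell r powr \<beta>) * supnorm (ball x r) u
       + ereal (ell r powr (\<alpha> + \<beta>)) * Lsemi \<alpha> (ball x r) u"
      proof -
        have "0 \<le> supnorm (ball x r) u" using that by (intro supnorm_nonneg[of x]) auto
        then show ?thesis by (intro ereal_le_add_self2 mult_nonneg_nonneg) auto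
      qed
      also have "\<dots> \<le> ereal M" using LQ_elem[OF that(1-3), where \<alpha>=\<alpha> and \<beta>=\<beta> and u=u] by (simp only: real)
      finally show ?thesis by simp
    qed
    have Q1: "ell (bdist \<Omega> x) powr \<beta> * \<bar>u x\<bar> \<le> K powr \<beta> * M" if "x \<in> \<Omega>" for x
      unfolding K_def using assms that by (intro lower_Q1[where u=u]) (auto intro: P1)
    have Q2: "ell (min (bdist \<Omega> x) (bdist \<Omega> y)) powr (\<alpha> + \<beta>) * \<bar>u x - u y\<bar>
           / ell (dist x y) powr \<alpha> \<le> 2 * K powr (\<alpha> + \<beta>) * M"
      if "x \<in> \<Omega>" "y \<in> \<Omega>" "x \<noteq> y" for x y
    proof (cases "bdist \<Omega> x \<le> bdist \<Omega> y")
      case True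
      then show ?thesis unfolding K_def by (rule lower_Q2_aux[OF assms that(1,2,3) _ M0 P1 P2])
    next
      case False
      have "ell (min (bdist \<Omega> y) (bdist \<Omega> x)) powr (\<alpha> + \<beta>) * \<bar>u y - u x\<bar>
           / ell (dist y x) powr \<alpha> \<le> 2 * K powr (\<alpha> + \<beta>) * M"
        unfolding K_def using False that
        by (intro lower_Q2_aux[OF assms _ _ _ _ M0 P1 P2]) auto
      then show ?thesis by (simp add: min.commute dist_commute abs_minus_commute)
    qed
    have A: "(SUP x \<in> \<Omega>. ereal (ell (bdist \<Omega> x) powr \<beta> * \<bar>u x\<bar>)) \<le> ereal (K powr \<beta> * M)"
      using Q1 by (intro SUP_least) auto
    have B: "Lsemi_w \<alpha> \<beta> \<Omega> u \<le> ereal (2 * K powr (\<alpha> + \<beta>) * M)"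
      unfolding Lsemi_w_def using Q2 by (intro SUP_least) auto
    have "Lnorm_w \<alpha> \<beta> \<Omega> u \<le> ereal (K powr \<beta> * M) + ereal (2 * K powr (\<alpha> + \<beta>) * M)"
      unfolding Lnorm_w_def using A B by (rule add_mono)
    also have "\<dots> = ereal (S * M)" by (simp add: S_def algebra_simps)
    finally have L: "Lnorm_w \<alpha> \<beta> \<Omega> u \<le> ereal (S * M)" .
    have "ereal (1 / S) * Lnorm_w \<alpha> \<beta> \<Omega> u \<le> ereal (1 / S) * ereal (S * M)"
      using L S0 by (intro ereal_mult_left_mono) auto
    also have "\<dots> = ereal M" using S0 by simp
    finally show ?thesis using real by (simp add: S_def K_def)
  qed
qed

lemma upper_main:
  fixes \<Omega> :: "'a::euclidean_space set"
  assumes "\<alpha> \<ge> 0" "\<beta> \<ge> 0" "r0 > 0" "lam > 1" "open \<Omega>" "\<Omega> \<noteq> {}" "\<Omega> \<noteq> UNIV"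
  shows "local_quantity \<alpha> \<beta> r0 lam \<Omega> u
     \<le> ereal (Ku lam powr \<beta> + Ku lam powr (\<alpha> + \<beta>)) * Lnorm_w \<alpha> \<beta> \<Omega> u"
proof -
  define K where "K = Ku lam"
  have K1: "K \<ge> 1" unfolding K_def by (rule Ku_ge1[OF assms(4)])
  define C where "C = K powr \<beta> + K powr (\<alpha> + \<beta>)"
  have C0: "C > 0" using K1 by (simp add: C_def add_pos_pos)
  define A where "A = (SUP x \<in> \<Omega>. ereal (ell (bdist \<Omega> x) powr \<beta> * \<bar>u x\<bar>))"
  define B where "B = Lsemi_w \<alpha> \<beta> \<Omega> u"
  have LN: "Lnorm_w \<alpha> \<beta> \<Omega> u = A + B" by (simp add: Lnorm_w_def A_def B_def)
  obtain x0 where x0: "x0 \<in> \<Omega>" using assms by blast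
  obtain e where e: "e > 0" "ball x0 e \<subseteq> \<Omega>" using assms(5) x0 open_contains_ball by blast
  obtain y0 where y0: "y0 \<in> ball x0 e" "y0 \<noteq> x0" using other_point[OF e(1)] by blast
  have y0O: "y0 \<in> \<Omega>" using y0 e by blast
  have A0: "0 \<le> A" unfolding A_def using x0 by (intro SUP_upper2[where i=x0]) auto
  have B0: "0 \<le> B" unfolding B_def Lsemi_w_def using x0 y0O y0
    by (intro SUP_upper2[where i="(x0,y0)"]) (auto intro!: divide_nonneg_nonneg mult_nonneg_nonneg)
  show ?thesis
  proof (cases "Lnorm_w \<alpha> \<beta> \<Omega> u" rule: ereal_cases)
    case PInf then show ?thesis using C0 by (simp add: C_def K_def)
  next
    case MInf
    have "0 \<le> Lnorm_w \<alpha> \<beta> \<Omega> u" unfolding LN using A0 B0 by (rule add_nonneg_nonneg)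
    then show ?thesis using MInf by simp
  next
    case (real M)
    have AM: "A \<le> ereal M" using LN real B0 ereal_le_add_self by metis
    have BM: "B \<le> ereal M" using LN real A0 ereal_le_add_self2 by metis
    have R1: "ell (bdist \<Omega> z) powr \<beta> * \<bar>u z\<bar> \<le> M" if "z \<in> \<Omega>" for z
    proof -
      have "ereal (ell (bdist \<Omega> z) powr \<beta> * \<bar>u z\<bar>) \<le> A" unfolding A_def using that by (rule SUP_upper)
      then have "ereal (ell (bdist \<Omega> z) powr \<beta> * \<bar>u z\<bar>) \<le> ereal M" using AM by (rule order_trans)
      then show ?thesis by simp
    qed
    have R2: "ell (min (bdist \<Omega> y) (bdist \<Omega> z)) powr (\<alpha> + \<beta>) * \<bar>u y - u z\<bar> / ell (dist y z) powr \<alpha> \<le> M"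
      if "y \<in> \<Omega>" "z \<in> \<Omega>" "y \<noteq> z" for y z
    proof -
      have "ereal (ell (min (bdist \<Omega> y) (bdist \<Omega> z)) powr (\<alpha> + \<beta>) * \<bar>u y - u z\<bar> / ell (dist y z) powr \<alpha>) \<le> B"
        unfolding B_def Lsemi_w_def using that by (intro SUP_upper2[where i="(y,z)"]) auto
      then have "ereal (ell (min (bdist \<Omega> y) (bdist \<Omega> z)) powr (\<alpha> + \<beta>) * \<bar>u y - u z\<bar> / ell (dist y z) powr \<alpha>) \<le> ereal M" using BM by (rule order_trans)
      then show ?thesis by simp
    qed
    have "local_quantity \<alpha> \<beta> r0 lam \<Omega> u \<le> ereal (C * M)"
      unfolding local_quantity_def
    proof (rule SUP_least, clarsimp)
      fix x r assume xr: "0 < r" "r < r0" "ball x (lam * r) \<subseteq> \<Omega>"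
      have a0: "ell r powr \<beta> > 0" "ell r powr (\<alpha> + \<beta>) > 0" using ell_pos[OF xr(1)] by auto
      have 1: "ereal (ell r powr \<beta>) * supnorm (ball x r) u \<le> ereal (K powr \<beta> * M)"
        unfolding supnorm_def using a0 unfolding K_def
        by (intro ereal_mult_SUP_le upper_pt1[where u=u and \<Omega>=\<Omega>]) (use assms xr R1 in auto)
      have key: "\<And>y z. y \<in> ball x r \<Longrightarrow> z \<in> ball x r \<Longrightarrow> y \<noteq> z \<Longrightarrow>
          ell r powr (\<alpha> + \<beta>) * (\<bar>u y - u z\<bar> / ell (dist y z) powr \<alpha>) \<le> K powr (\<alpha> + \<beta>) * M"
        using upper_pt2[OF assms(1,2,4,5,6,7) xr(1,3) _ _ _ R2] unfolding K_def by blast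
      have 2: "ereal (ell r powr (\<alpha> + \<beta>)) * Lsemi \<alpha> (ball x r) u \<le> ereal (K powr (\<alpha> + \<beta>) * M)"
        unfolding Lsemi_def using key by (intro ereal_mult_SUP_le[OF a0(2)]) auto
      have "ereal (ell r powr \<beta>) * supnorm (ball x r) u + ereal (ell r powr (\<alpha> + \<beta>)) * Lsemi \<alpha> (ball x r) u
          \<le> ereal (K powr \<beta> * M) + ereal (K powr (\<alpha> + \<beta>) * M)" using 1 2 by (rule add_mono)
      also have "\<dots> = ereal (C * M)" by (simp add: C_def algebra_simps)
      finally show "ereal (ell r powr \<beta>) * supnorm (ball x r) u + ereal (ell r powr (\<alpha> + \<beta>)) * Lsemi \<alpha> (ball x r) u
          \<le> ereal (C * M)" .
    qed
    then show ?thesis using real by (simp add: C_def K_def)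
  qed
qed


theorem lemma3p2:
  fixes R \<alpha> \<beta> r0 lam :: real
  assumes "\<alpha> \<ge> 0" and "\<beta> \<ge> 0" and "r0 > 0" and "lam > 1"
  shows "\<exists>c C. c > 0 \<and> C > 0 \<and>
    (\<forall>(\<Omega> :: 'a::euclidean_space set) (u :: 'a \<Rightarrow> real).
       open \<Omega> \<and> \<Omega> \<noteq> {} \<and> \<Omega> \<noteq> UNIV
       \<and> bdd_above (bdist \<Omega> ` \<Omega>) \<and> (SUP x \<in> \<Omega>. bdist \<Omega> x) = R \<longrightarrow>
         ereal c * Lnorm_w \<alpha> \<beta> \<Omega> u \<le> local_quantity \<alpha> \<beta> r0 lam \<Omega> u
       \<and> local_quantity \<alpha> \<beta> r0 lam \<Omega> u \<le> ereal C * Lnorm_w \<alpha> \<beta> \<Omega> u)"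
proof (intro exI conjI allI impI)
  have K1: "Kl lam r0 \<ge> 1" by (rule Kl_ge1[OF assms(4)])
  have K2: "Ku lam \<ge> 1" by (rule Ku_ge1[OF assms(4)])
  show "1 / (Kl lam r0 powr \<beta> + 2 * Kl lam r0 powr (\<alpha> + \<beta>)) > 0"
    using K1 by (simp add: add_pos_pos)
  show "Ku lam powr \<beta> + Ku lam powr (\<alpha> + \<beta>) > 0"
    using K2 by (simp add: add_pos_pos)
  fix \<Omega> :: "'a::euclidean_space set" and u :: "'a \<Rightarrow> real"
  assume h: "open \<Omega> \<and> \<Omega> \<noteq> {} \<and> \<Omega> \<noteq> UNIV
       \<and> bdd_above (bdist \<Omega> ` \<Omega>) \<and> (SUP x \<in> \<Omega>. bdist \<Omega> x) = R"
  show "ereal (1 / (Kl lam r0 powr \<beta> + 2 * Kl lam r0 powr (\<alpha> + \<beta>))) * Lnorm_w \<alpha> \<beta> \<Omega> u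
      \<le> local_quantity \<alpha> \<beta> r0 lam \<Omega> u"
    using h by (intro lower_main assms) auto
  show "local_quantity \<alpha> \<beta> r0 lam \<Omega> u
      \<le> ereal (Ku lam powr \<beta> + Ku lam powr (\<alpha> + \<beta>)) * Lnorm_w \<alpha> \<beta> \<Omega> u"
    using h by (intro upper_main assms) auto
qed

end
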